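(* Let $\mathcal{M}$ be a family of distributions on $\mathcal{W}$. For any measurable loss $\ell$ and any algorithm $\mathsf{A}$ run on $S'\sim(\mu')^{\otimes n}$ such that the marginal distribution of $\mathsf{A}(S')$ belongs to $\mathcal{M}$, \[ \mathrm{gen}(\mu,\mu',\mathsf{A})\ge\mathsf{D}_4\!\left(\frac{I(S';\mathsf{A}(S'))}{n},\mathcal{M}\right), \] where \[ \mathsf{D}_4(r,\mathcal{M})\triangleq\inf_{\nu\in\mathcal{M}}\ \inf_{\substack{P_{\hat W,Z'}\in U(\nu,\mu'):\\ I(\hat W;Z')\le r}}\mathbb{E}\big[L_\mu(\hat W)-\ell(\hat W,Z')\big], \] with $U(\nu,\mu')$ the set of couplings of $\nu$ (on $\mathcal{W}$) and $\mu'$ (on $\mathcal{Z}$).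
   Context: Setup: $\mathcal{Z},\mathcal{W}$ measurable spaces, $\ell:\mathcal{W}\times\mathcal{Z}\to[0,\infty)$ measurable loss, $\mu$ (test) and $\mu'$ (training) distributions on $\mathcal{Z}$, $S'=(Z'_1,\dots,Z'_n)$ i.i.d. $\sim\mu'$, $\mathsf{A}$ a Markov kernel from $\mathcal{Z}^n$ to $\mathcal{W}$, $W'=\mathsf{A}(S')$, $L_\mu(w)=\mathbb{E}_{Z\sim\mu}\ell(w,Z)$, $L_s(w)=\frac1n\sum_i\ell(w,z_i)$, $\mathrm{gen}(\mu,\mu',\mathsf{A})=\mathbb{E}[L_\mu(W')-L_{S'}(W')]$. All expectations assumed finite. *)

theory Defs
  imports "HOL-Probability.Probability"
begin

definition KL_div :: "'a measure \<Rightarrow> 'a measure \<Rightarrow> ereal" where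
  "KL_div P Q =
     (if sets P = sets Q \<and> absolutely_continuous Q P then
        (let f = (\<lambda>x. enn2real (RN_deriv Q P x)) in
           enn2ereal (\<integral>\<^sup>+ x. ennreal (f x * ln (f x)) \<partial>Q)
         - enn2ereal (\<integral>\<^sup>+ x. ennreal (- (f x * ln (f x))) \<partial>Q))
      else \<infinity>)"

definition mutual_inf :: "'a measure \<Rightarrow> 'b measure \<Rightarrow> ('a \<times> 'b) measure \<Rightarrow> ereal" where
  "mutual_inf A B P = KL_div P (distr P A fst \<Otimes>\<^sub>M distr P B snd)"

definition couplings :: "'w measure \<Rightarrow> 'z measure \<Rightarrow> 'w measure \<Rightarrow> 'z measure \<Rightarrow> ('w \<times> 'z) measure set" where
  "couplings MW MZ \<nu> \<mu>' =
     {P. prob_space P \<and> sets P = sets (MW \<Otimes>\<^sub>M MZ)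
         \<and> distr P MW fst = \<nu> \<and> distr P MZ snd = \<mu>'}"

definition pop_risk :: "'z measure \<Rightarrow> ('w \<Rightarrow> 'z \<Rightarrow> real) \<Rightarrow> 'w \<Rightarrow> ennreal" where
  "pop_risk \<mu> loss w = (\<integral>\<^sup>+ z. ennreal (loss w z) \<partial>\<mu>)"

definition emp_risk :: "nat \<Rightarrow> ('w \<Rightarrow> 'z \<Rightarrow> real) \<Rightarrow> (nat \<Rightarrow> 'z) \<Rightarrow> 'w \<Rightarrow> real" where
  "emp_risk n loss s w = (\<Sum>i<n. loss w (s i)) / real n"

definition joint_law :: "'z measure \<Rightarrow> 'w measure \<Rightarrow> nat \<Rightarrow> 'z measure
     \<Rightarrow> ((nat \<Rightarrow> 'z) \<Rightarrow> 'w measure) \<Rightarrow> ((nat \<Rightarrow> 'z) \<times> 'w) measure" where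
  "joint_law MZ MW n \<mu>' A =
     PiM {..<n} (\<lambda>_. \<mu>') \<bind>
       (\<lambda>s. A s \<bind> (\<lambda>w. return (PiM {..<n} (\<lambda>_. MZ) \<Otimes>\<^sub>M MW) (s, w)))"

definition gen :: "'z measure \<Rightarrow> 'w measure \<Rightarrow> nat \<Rightarrow> ('w \<Rightarrow> 'z \<Rightarrow> real) \<Rightarrow> 'z measure
     \<Rightarrow> 'z measure \<Rightarrow> ((nat \<Rightarrow> 'z) \<Rightarrow> 'w measure) \<Rightarrow> ereal" where
  "gen MZ MW n loss \<mu> \<mu>' A =
     enn2ereal (\<integral>\<^sup>+ p. pop_risk \<mu> loss (snd p) \<partial>joint_law MZ MW n \<mu>' A)
   - enn2ereal (\<integral>\<^sup>+ p. ennreal (emp_risk n loss (fst p) (snd p)) \<partial>joint_law MZ MW n \<mu>' A)"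

definition D4 :: "'w measure \<Rightarrow> 'z measure \<Rightarrow> ('w \<Rightarrow> 'z \<Rightarrow> real) \<Rightarrow> 'z measure \<Rightarrow> 'z measure
     \<Rightarrow> ereal \<Rightarrow> 'w measure set \<Rightarrow> ereal" where
  "D4 MW MZ loss \<mu> \<mu>' r \<M> =
     (INF \<nu>\<in>\<M>. INF P\<in>{P \<in> couplings MW MZ \<nu> \<mu>'. mutual_inf MW MZ P \<le> r}.
        enn2ereal (\<integral>\<^sup>+ p. pop_risk \<mu> loss (fst p) \<partial>P)
      - enn2ereal (\<integral>\<^sup>+ p. ennreal (loss (fst p) (snd p)) \<partial>P))"

end

theory Submission
  imports Defs
begin

locale th7 =
  fixes MZ :: "'z measure" and MW :: "'w measure"
    and loss :: "'w \<Rightarrow> 'z \<Rightarrow> real"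
    and \<mu> \<mu>' :: "'z measure" and n :: nat
    and A :: "(nat \<Rightarrow> 'z) \<Rightarrow> 'w measure"
  assumes loss_meas: "(\<lambda>(w, z). loss w z) \<in> borel_measurable (MW \<Otimes>\<^sub>M MZ)"
    and loss_nonneg: "\<And>w z. 0 \<le> loss w z"
    and mu: "prob_space \<mu>" "sets \<mu> = sets MZ"
    and mu': "prob_space \<mu>'" "sets \<mu>' = sets MZ"
    and n: "0 < n"
    and kernel: "A \<in> PiM {..<n} (\<lambda>_. MZ) \<rightarrow>\<^sub>M prob_algebra MW"
begin

abbreviation "MSS \<equiv> PiM {..<n} (\<lambda>_. MZ)"
abbreviation "\<mu>n \<equiv> PiM {..<n} (\<lambda>_. \<mu>')"
abbreviation "JL \<equiv> joint_law MZ MW n \<mu>' A"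

lemma sets_mun: "sets \<mu>n = sets MSS"
  by (rule sets_PiM_cong) (auto simp: mu')

lemma space_mun: "space \<mu>n = space MSS"
  using sets_mun by (rule sets_eq_imp_space_eq)

lemma prob_mun: "prob_space \<mu>n"
  by (intro prob_space_PiM) (simp add: mu')

lemma A_meas: "A \<in> measurable \<mu>n (subprob_algebra MW)"
  using measurable_prob_algebraD[OF kernel] by (simp add: measurable_cong_sets[OF sets_mun refl])

lemma A_prob: "s \<in> space \<mu>n \<Longrightarrow> prob_space (A s)"
  using kernel by (auto simp: space_mun dest: measurable_space simp: space_prob_algebra)

lemma A_sets: "s \<in> space \<mu>n \<Longrightarrow> sets (A s) = sets MW"
  using kernel by (auto simp: space_mun dest: measurable_space simp: space_prob_algebra)

definition "K s = A s \<bind> (\<lambda>w. return (MSS \<Otimes>\<^sub>M MW) (s, w))"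

lemma K_meas: "K \<in> measurable \<mu>n (subprob_algebra (MSS \<Otimes>\<^sub>M MW))"
  unfolding K_def
proof (rule measurable_bind'[OF A_meas])
  have "(\<lambda>x. x) \<in> measurable (\<mu>n \<Otimes>\<^sub>M MW) (MSS \<Otimes>\<^sub>M MW)"
    by (simp add: measurable_ident_sets sets_pair_measure_cong[OF sets_mun refl])
  then show "(\<lambda>(s, w). return (MSS \<Otimes>\<^sub>M MW) (s, w)) \<in> measurable (\<mu>n \<Otimes>\<^sub>M MW) (subprob_algebra (MSS \<Otimes>\<^sub>M MW))"
    using measurable_compose[OF _ return_measurable] by (simp add: case_prod_beta')
qed

lemma J_eq: "JL = \<mu>n \<bind> K"
  unfolding joint_law_def K_def ..

lemma space_mun_ne: "space \<mu>n \<noteq> {}"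
  using prob_space.not_empty[OF prob_mun] .

lemma sets_J: "sets JL = sets (MSS \<Otimes>\<^sub>M MW)"
  unfolding J_eq by (rule sets_bind[OF sets_kernel[OF K_meas] space_mun_ne])

lemma space_J: "space JL = space (MSS \<Otimes>\<^sub>M MW)"
  using sets_J by (rule sets_eq_imp_space_eq)

lemma J_int:
  assumes h: "h \<in> borel_measurable (MSS \<Otimes>\<^sub>M MW)"
  shows "(\<integral>\<^sup>+ p. h p \<partial>JL) = (\<integral>\<^sup>+ s. \<integral>\<^sup>+ w. h (s, w) \<partial>A s \<partial>\<mu>n)"
proof -
  have "(\<integral>\<^sup>+ p. h p \<partial>JL) = (\<integral>\<^sup>+ s. \<integral>\<^sup>+ p. h p \<partial>K s \<partial>\<mu>n)"
    unfolding J_eq by (rule nn_integral_bind[OF h K_meas])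
  also have "\<dots> = (\<integral>\<^sup>+ s. \<integral>\<^sup>+ w. h (s, w) \<partial>A s \<partial>\<mu>n)"
  proof (rule nn_integral_cong)
    fix s assume s: "s \<in> space \<mu>n"
    have rm: "(\<lambda>w. return (MSS \<Otimes>\<^sub>M MW) (s, w)) \<in> measurable (A s) (subprob_algebra (MSS \<Otimes>\<^sub>M MW))"
    proof -
      have "(\<lambda>w. (s, w)) \<in> measurable (A s) (MSS \<Otimes>\<^sub>M MW)"
        using s by (simp add: measurable_cong_sets[OF A_sets[OF s] refl] space_mun)
      then show ?thesis using measurable_compose[OF _ return_measurable] by blast
    qed
    have "(\<integral>\<^sup>+ p. h p \<partial>K s) = (\<integral>\<^sup>+ w. \<integral>\<^sup>+ p. h p \<partial>return (MSS \<Otimes>\<^sub>M MW) (s, w) \<partial>A s)"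
      unfolding K_def by (rule nn_integral_bind[OF h rm])
    also have "\<dots> = (\<integral>\<^sup>+ w. h (s, w) \<partial>A s)"
    proof (rule nn_integral_cong)
      fix w assume "w \<in> space (A s)"
      then have "(s, w) \<in> space (MSS \<Otimes>\<^sub>M MW)"
        using s sets_eq_imp_space_eq[OF A_sets[OF s]] by (simp add: space_pair_measure space_mun)
      then show "(\<integral>\<^sup>+ p. h p \<partial>return (MSS \<Otimes>\<^sub>M MW) (s, w)) = h (s, w)"
        using h by (simp add: nn_integral_return)
    qed
    finally show "(\<integral>\<^sup>+ p. h p \<partial>K s) = (\<integral>\<^sup>+ w. h (s, w) \<partial>A s)" .
  qed
  finally show ?thesis .
qed

lemma prob_J: "prob_space JL"
proof (rule prob_spaceI)
  have "emeasure JL (space JL) = (\<integral>\<^sup>+ p. 1 \<partial>JL)" by simp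
  also have "\<dots> = (\<integral>\<^sup>+ s. \<integral>\<^sup>+ w. 1 \<partial>A s \<partial>\<mu>n)"
    by (rule J_int) simp
  also have "\<dots> = (\<integral>\<^sup>+ s. 1 \<partial>\<mu>n)"
    by (intro nn_integral_cong) (simp add: prob_space.emeasure_space_1[OF A_prob])
  also have "\<dots> = 1" using prob_space.emeasure_space_1[OF prob_mun] by simp
  finally show "emeasure JL (space JL) = 1" .
qed

lemma distr_J_fst: "distr JL MSS fst = \<mu>n"
proof (rule measure_eqI)
  show "sets (distr JL MSS fst) = sets \<mu>n" by (simp add: sets_mun)
  fix X assume X: "X \<in> sets (distr JL MSS fst)"
  then have X': "X \<in> sets MSS" by simp
  have "emeasure (distr JL MSS fst) X = (\<integral>\<^sup>+ p. indicator X (fst p) \<partial>JL)"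
  proof -
    have fm: "fst \<in> measurable JL MSS" by (simp add: measurable_cong_sets[OF sets_J refl])
    have S: "fst -` X \<inter> space JL \<in> sets JL" using measurable_sets[OF fm X'] .
    have "emeasure (distr JL MSS fst) X = emeasure JL (fst -` X \<inter> space JL)"
      using X' fm by (simp add: emeasure_distr)
    also have "\<dots> = (\<integral>\<^sup>+ p. indicator (fst -` X \<inter> space JL) p \<partial>JL)"
      using S by simp
    also have "\<dots> = (\<integral>\<^sup>+ p. indicator X (fst p) \<partial>JL)"
      by (intro nn_integral_cong) (auto split: split_indicator)
    finally show ?thesis .
  qed
  also have "\<dots> = (\<integral>\<^sup>+ s. \<integral>\<^sup>+ w. indicator X s \<partial>A s \<partial>\<mu>n)"
    using X' J_int[of "\<lambda>p. indicator X (fst p)"] by simp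
  also have "\<dots> = (\<integral>\<^sup>+ s. indicator X s \<partial>\<mu>n)"
    by (intro nn_integral_cong) (simp add: prob_space.emeasure_space_1[OF A_prob])
  also have "\<dots> = emeasure \<mu>n X" using X' sets_mun by simp
  finally show "emeasure (distr JL MSS fst) X = emeasure \<mu>n X" .
qed

end

lemma emeasure_distr_nn:
  assumes f: "f \<in> measurable M N" and B: "B \<in> sets N"
  shows "emeasure (distr M N f) B = (\<integral>\<^sup>+ x. indicator B (f x) \<partial>M)"
proof -
  have "emeasure (distr M N f) B = (\<integral>\<^sup>+ x. indicator B x \<partial>distr M N f)"
    using B by simp
  also have "\<dots> = (\<integral>\<^sup>+ x. indicator B (f x) \<partial>M)"
    using B f by (intro nn_integral_distr) auto
  finally show ?thesis .
qed

context th7 begin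

abbreviation "\<nu> \<equiv> distr JL MW snd"

lemma prob_nu: "prob_space \<nu>"
  by (rule prob_space.prob_space_distr[OF prob_J]) (simp add: measurable_cong_sets[OF sets_J refl])

definition "c = ennreal (1 / real n)"

lemma c_n: "c * of_nat n = 1"
  using n by (simp add: c_def ennreal_of_nat_eq_real_of_nat ennreal_mult''[symmetric] del: ennreal_mult'')

definition "phi = (\<lambda>(i::nat, p::(nat \<Rightarrow> 'z) \<times> 'w). (snd p, fst p i))"

lemma phi_meas: "phi \<in> measurable (count_space {..<n} \<Otimes>\<^sub>M JL) (MW \<Otimes>\<^sub>M MZ)"
  unfolding phi_def
proof (rule measurable_pair_measure_countable1)
  fix i assume i: "i \<in> {..<n}"
  show "(\<lambda>p. case (i, p) of (i, p) \<Rightarrow> (snd p, fst p i)) \<in> measurable JL (MW \<Otimes>\<^sub>M MZ)"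
    using i by (simp add: measurable_cong_sets[OF sets_J refl])
qed simp

lemma pm_meas: "i < n \<Longrightarrow> (\<lambda>p. (snd p, fst p i)) \<in> measurable JL (MW \<Otimes>\<^sub>M MZ)"
  by (simp add: measurable_cong_sets[OF sets_J refl])

lemma comp_meas: "i < n \<Longrightarrow> g \<in> measurable (MW \<Otimes>\<^sub>M MZ) N \<Longrightarrow> (\<lambda>p. g (snd p, fst p i)) \<in> measurable JL N"
  using measurable_compose[OF pm_meas] by blast

definition "P = scale_measure c (distr (count_space {..<n} \<Otimes>\<^sub>M JL) (MW \<Otimes>\<^sub>M MZ) phi)"

lemma sets_P: "sets P = sets (MW \<Otimes>\<^sub>M MZ)"
  by (simp add: P_def)

lemma space_P: "space P = space (MW \<Otimes>\<^sub>M MZ)"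
  by (simp add: P_def space_scale_measure)

lemma P_int:
  assumes h: "h \<in> borel_measurable (MW \<Otimes>\<^sub>M MZ)"
  shows "(\<integral>\<^sup>+ x. h x \<partial>P) = c * (\<Sum>i<n. \<integral>\<^sup>+ p. h (snd p, fst p i) \<partial>JL)"
proof -
  interpret JS: sigma_finite_measure JL using prob_J by (simp add: prob_space_imp_sigma_finite)
  have "(\<integral>\<^sup>+ x. h x \<partial>P) = c * (\<integral>\<^sup>+ x. h x \<partial>distr (count_space {..<n} \<Otimes>\<^sub>M JL) (MW \<Otimes>\<^sub>M MZ) phi)"
    unfolding P_def using h by (intro nn_integral_scale_measure) simp
  also have "(\<integral>\<^sup>+ x. h x \<partial>distr (count_space {..<n} \<Otimes>\<^sub>M JL) (MW \<Otimes>\<^sub>M MZ) phi)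
      = (\<integral>\<^sup>+ x. h (phi x) \<partial>(count_space {..<n} \<Otimes>\<^sub>M JL))"
    using h phi_meas by (intro nn_integral_distr) auto
  also have "\<dots> = (\<integral>\<^sup>+ i. \<integral>\<^sup>+ p. h (phi (i, p)) \<partial>JL \<partial>count_space {..<n})"
    using h phi_meas by (intro JS.nn_integral_fst[symmetric]) auto
  also have "\<dots> = (\<Sum>i<n. \<integral>\<^sup>+ p. h (snd p, fst p i) \<partial>JL)"
    by (simp add: nn_integral_count_space_finite phi_def)
  finally show ?thesis .
qed

lemma prob_P: "prob_space P"
proof (rule prob_spaceI)
  have "emeasure P (space P) = (\<integral>\<^sup>+ x. 1 \<partial>P)" by simp
  also have "\<dots> = c * (\<Sum>i<n. \<integral>\<^sup>+ p. 1 \<partial>JL)" by (rule P_int) simp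
  also have "\<dots> = c * of_nat n"
    using prob_space.emeasure_space_1[OF prob_J] by simp
  finally show "emeasure P (space P) = 1" using c_n by simp
qed

lemma distr_P_fst: "distr P MW fst = \<nu>"
proof (rule measure_eqI)
  show "sets (distr P MW fst) = sets \<nu>" by simp
  fix B assume "B \<in> sets (distr P MW fst)"
  then have B: "B \<in> sets MW" by simp
  have sn: "snd \<in> measurable JL MW" by (simp add: measurable_cong_sets[OF sets_J refl])
  have "emeasure (distr P MW fst) B = (\<integral>\<^sup>+ x. indicator B (fst x) \<partial>P)"
    using B by (intro emeasure_distr_nn) (simp_all add: measurable_cong_sets[OF sets_P refl])
  also have "\<dots> = c * (\<Sum>i<n. \<integral>\<^sup>+ p. indicator B (snd p) \<partial>JL)"
    using P_int[of "\<lambda>x. indicator B (fst x)"] B by simp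
  also have "\<dots> = c * of_nat n * emeasure \<nu> B"
    using emeasure_distr_nn[OF sn B] by (simp add: mult.assoc)
  finally show "emeasure (distr P MW fst) B = emeasure \<nu> B" using c_n by simp
qed

lemma mun_comp: "i < n \<Longrightarrow> (\<integral>\<^sup>+ s. f (s i) \<partial>\<mu>n) = (\<integral>\<^sup>+ z. f z \<partial>\<mu>')" if "f \<in> borel_measurable \<mu>'"
proof -
  assume i: "i < n"
  have "(\<integral>\<^sup>+ z. f z \<partial>\<mu>') = (\<integral>\<^sup>+ z. f z \<partial>distr \<mu>n \<mu>' (\<lambda>s. s i))"
    using distr_PiM_component[of "{..<n}" "\<lambda>_. \<mu>'" i] i mu' by simp
  also have "\<dots> = (\<integral>\<^sup>+ s. f (s i) \<partial>\<mu>n)"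
    using that i by (intro nn_integral_distr) auto
  finally show ?thesis by simp
qed

lemma distr_P_snd: "distr P MZ snd = \<mu>'"
proof (rule measure_eqI)
  show "sets (distr P MZ snd) = sets \<mu>'" by (simp add: mu')
  fix B assume "B \<in> sets (distr P MZ snd)"
  then have B: "B \<in> sets MZ" by simp
  have "emeasure (distr P MZ snd) B = (\<integral>\<^sup>+ x. indicator B (snd x) \<partial>P)"
    using B by (intro emeasure_distr_nn) (simp_all add: measurable_cong_sets[OF sets_P refl])
  also have "\<dots> = c * (\<Sum>i<n. \<integral>\<^sup>+ p. indicator B (fst p i) \<partial>JL)"
    using P_int[of "\<lambda>x. indicator B (snd x)"] B by simp
  also have "\<dots> = c * (\<Sum>i<n. emeasure \<mu>' B)"
  proof (intro arg_cong[where f="\<lambda>x. c * x"] sum.cong refl)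
    fix i assume i: "i \<in> {..<n}"
    have "(\<integral>\<^sup>+ p. indicator B (fst p i) \<partial>JL) = (\<integral>\<^sup>+ s. \<integral>\<^sup>+ w. indicator B (s i) \<partial>A s \<partial>\<mu>n)"
      using J_int[of "\<lambda>p. indicator B (fst p i)"] B i by simp
    also have "\<dots> = (\<integral>\<^sup>+ s. indicator B (s i) \<partial>\<mu>n)"
      by (intro nn_integral_cong) (simp add: prob_space.emeasure_space_1[OF A_prob])
    also have "\<dots> = (\<integral>\<^sup>+ z. indicator B z \<partial>\<mu>')"
      using i B mu' by (intro mun_comp) auto
    also have "\<dots> = emeasure \<mu>' B" using B mu' by simp
    finally show "(\<integral>\<^sup>+ p. indicator B (fst p i) \<partial>JL) = emeasure \<mu>' B" .
  qed
  finally show "emeasure (distr P MZ snd) B = emeasure \<mu>' B" using c_n by (simp add: mult.assoc[symmetric])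
qed

lemma P_coupling: "P \<in> couplings MW MZ \<nu> \<mu>'"
  unfolding couplings_def using prob_P sets_P distr_P_fst distr_P_snd by simp

lemma pop_meas: "pop_risk \<mu> loss \<in> borel_measurable MW"
proof -
  interpret m: sigma_finite_measure \<mu> using mu by (simp add: prob_space_imp_sigma_finite)
  have "(\<lambda>(w, z). ennreal (loss w z)) \<in> borel_measurable (MW \<Otimes>\<^sub>M \<mu>)"
    using loss_meas by (simp add: measurable_cong_sets[OF sets_pair_measure_cong[OF refl mu(2)] refl])
  then show ?thesis unfolding pop_risk_def by (rule m.borel_measurable_nn_integral[of "\<lambda>w z. ennreal (loss w z)", simplified])
qed

lemma value_P:
  "enn2ereal (\<integral>\<^sup>+ p. pop_risk \<mu> loss (fst p) \<partial>P) - enn2ereal (\<integral>\<^sup>+ p. ennreal (loss (fst p) (snd p)) \<partial>P)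
   = gen MZ MW n loss \<mu> \<mu>' A"
proof -
  have lm: "(\<lambda>p. ennreal (loss (fst p) (snd p))) \<in> borel_measurable (MW \<Otimes>\<^sub>M MZ)"
    using loss_meas by (simp add: case_prod_beta')
  have 1: "(\<integral>\<^sup>+ p. pop_risk \<mu> loss (fst p) \<partial>P) = (\<integral>\<^sup>+ p. pop_risk \<mu> loss (snd p) \<partial>JL)"
  proof -
    have "(\<integral>\<^sup>+ p. pop_risk \<mu> loss (fst p) \<partial>P) = c * (\<Sum>i<n. \<integral>\<^sup>+ p. pop_risk \<mu> loss (snd p) \<partial>JL)"
      using P_int[of "\<lambda>p. pop_risk \<mu> loss (fst p)"] pop_meas by simp
    also have "\<dots> = (\<integral>\<^sup>+ p. pop_risk \<mu> loss (snd p) \<partial>JL)"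
      using c_n by (simp add: mult.assoc[symmetric])
    finally show ?thesis .
  qed
  have 2: "(\<integral>\<^sup>+ p. ennreal (loss (fst p) (snd p)) \<partial>P) = (\<integral>\<^sup>+ p. ennreal (emp_risk n loss (fst p) (snd p)) \<partial>JL)"
  proof -
    have mi: "\<And>i. i < n \<Longrightarrow> (\<lambda>p. ennreal (loss (snd p) (fst p i))) \<in> borel_measurable JL"
      using comp_meas[OF _ lm] by simp
    have "(\<integral>\<^sup>+ p. ennreal (loss (fst p) (snd p)) \<partial>P) = c * (\<Sum>i<n. \<integral>\<^sup>+ p. ennreal (loss (snd p) (fst p i)) \<partial>JL)"
      using P_int[OF lm] by simp
    also have "\<dots> = c * (\<integral>\<^sup>+ p. (\<Sum>i<n. ennreal (loss (snd p) (fst p i))) \<partial>JL)"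
      using mi by (subst nn_integral_sum) auto
    also have "\<dots> = (\<integral>\<^sup>+ p. c * (\<Sum>i<n. ennreal (loss (snd p) (fst p i))) \<partial>JL)"
      using mi by (subst nn_integral_cmult) auto
    also have "\<dots> = (\<integral>\<^sup>+ p. ennreal (emp_risk n loss (fst p) (snd p)) \<partial>JL)"
    proof (intro nn_integral_cong)
      fix p
      have "c * (\<Sum>i<n. ennreal (loss (snd p) (fst p i))) = ennreal (1 / real n) * ennreal (\<Sum>i<n. loss (snd p) (fst p i))"
        by (simp add: c_def loss_nonneg)
      also have "\<dots> = ennreal (emp_risk n loss (fst p) (snd p))"
        by (simp add: emp_risk_def ennreal_mult''[symmetric] loss_nonneg sum_nonneg del: ennreal_mult'')
      finally show "c * (\<Sum>i<n. ennreal (loss (snd p) (fst p i))) = ennreal (emp_risk n loss (fst p) (snd p))" .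
    qed
    finally show ?thesis .
  qed
  show ?thesis unfolding gen_def 1 2 ..
qed

end

context th7 begin

abbreviation "Q \<equiv> \<nu> \<Otimes>\<^sub>M \<mu>'"
abbreviation "Qn \<equiv> \<mu>n \<Otimes>\<^sub>M \<nu>"

lemma sets_nu: "sets \<nu> = sets MW" by simp

lemma sets_Q: "sets Q = sets (MW \<Otimes>\<^sub>M MZ)"
  by (rule sets_pair_measure_cong) (simp_all add: mu')

lemma sets_Qn: "sets Qn = sets (MSS \<Otimes>\<^sub>M MW)"
  by (rule sets_pair_measure_cong) (simp_all add: sets_mun)

lemma sets_JQn: "sets JL = sets Qn" using sets_J sets_Qn by simp

lemma space_Qn: "space Qn = space JL" using sets_JQn by (metis sets_eq_imp_space_eq)
lemma space_Q: "space Q = space (MW \<Otimes>\<^sub>M MZ)" using sets_Q by (metis sets_eq_imp_space_eq)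

lemma prob_Q: "prob_space Q"
  using prob_nu mu' by (intro prob_space_pair) (auto simp: prob_space_pair)

lemma prob_Qn: "prob_space Qn"
  using prob_nu prob_mun by (intro prob_space_pair) auto

lemma Q_int:
  assumes g: "g \<in> borel_measurable (MW \<Otimes>\<^sub>M MZ)" and i: "i < n"
  shows "(\<integral>\<^sup>+ p. g (snd p, fst p i) \<partial>Qn) = (\<integral>\<^sup>+ p. g p \<partial>Q)"
proof -
  interpret PS: pair_sigma_finite \<mu>n \<nu>
    using prob_mun prob_nu by (intro pair_sigma_finite.intro) (auto simp: prob_space_imp_sigma_finite)
  interpret m': sigma_finite_measure \<mu>' using mu' by (simp add: prob_space_imp_sigma_finite)
  have gm: "(\<lambda>p. g (snd p, fst p i)) \<in> borel_measurable Qn"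
    using comp_meas[OF i g] by (simp add: measurable_cong_sets[OF sets_JQn refl])
  have gQ: "g \<in> borel_measurable Q" using g by (simp add: measurable_cong_sets[OF sets_Q refl])
  have "(\<integral>\<^sup>+ p. g (snd p, fst p i) \<partial>Qn) = (\<integral>\<^sup>+ w. \<integral>\<^sup>+ s. g (w, s i) \<partial>\<mu>n \<partial>\<nu>)"
    using PS.nn_integral_snd[OF gm] by simp
  also have "\<dots> = (\<integral>\<^sup>+ w. \<integral>\<^sup>+ z. g (w, z) \<partial>\<mu>' \<partial>\<nu>)"
  proof (intro nn_integral_cong mun_comp i)
    fix w assume "w \<in> space \<nu>"
    then show "(\<lambda>z. g (w, z)) \<in> borel_measurable \<mu>'"
      using measurable_Pair2[OF gQ] by simp
  qed
  also have "\<dots> = (\<integral>\<^sup>+ p. g p \<partial>Q)"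
    using m'.nn_integral_fst[OF gQ] by simp
  finally show ?thesis .
qed

lemma neg_bound: "0 \<le> (x::real) \<Longrightarrow> - (x * ln x) \<le> 1"
proof (cases "x = 0")
  case False
  assume x: "0 \<le> x"
  then have xp: "0 < x" using False by simp
  have "ln (1/x) \<le> 1/x - 1" using xp by (intro ln_le_minus_one) simp
  then have "- ln x \<le> 1/x - 1" using xp by (simp add: ln_div)
  then have "x * (- ln x) \<le> x * (1/x - 1)" using xp by (intro mult_left_mono) auto
  then show ?thesis using xp by (simp add: algebra_simps)
qed simp

lemma ind_comp: "f \<in> measurable M N \<Longrightarrow> B \<in> sets N \<Longrightarrow> (\<integral>\<^sup>+ x. indicator B (f x) \<partial>M) = emeasure M (f -` B \<inter> space M)"
  using emeasure_distr[of f M N B] emeasure_distr_nn[of f M N B] by simp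

lemma P_ac:
  assumes ac: "absolutely_continuous Qn JL"
  shows "absolutely_continuous Q P"
  unfolding absolutely_continuous_def
proof
  fix N assume N: "N \<in> null_sets Q"
  have NQ: "N \<in> sets Q" and N0: "emeasure Q N = 0" using N by auto
  have NS: "N \<in> sets (MW \<Otimes>\<^sub>M MZ)" using NQ unfolding sets_Q .
  have NP: "N \<in> sets P" using NS unfolding sets_P .
  have "emeasure P N = (\<integral>\<^sup>+ x. indicator N x \<partial>P)" using NP by (rule nn_integral_indicator[symmetric])
  also have "\<dots> = c * (\<Sum>i<n. \<integral>\<^sup>+ p. indicator N (snd p, fst p i) \<partial>JL)"
    by (rule P_int) (rule borel_measurable_indicator[OF NS])
  also have "\<dots> = c * (\<Sum>i<n. 0)"
  proof (intro arg_cong[where f="\<lambda>x. c * x"] sum.cong refl)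
    fix i assume "i \<in> {..<n}"
    then have i: "i < n" by simp
    have mJ: "(\<lambda>p. (snd p, fst p i)) \<in> measurable JL (MW \<Otimes>\<^sub>M MZ)" using pm_meas[OF i] .
    then have mQ: "(\<lambda>p. (snd p, fst p i)) \<in> measurable Qn (MW \<Otimes>\<^sub>M MZ)"
      using measurable_cong_sets[OF sets_JQn refl] by blast
    have "emeasure Qn ((\<lambda>p. (snd p, fst p i)) -` N \<inter> space Qn) = (\<integral>\<^sup>+ p. indicator N (snd p, fst p i) \<partial>Qn)"
      using ind_comp[OF mQ NS] by (rule sym)
    also have "\<dots> = (\<integral>\<^sup>+ p. indicator N p \<partial>Q)"
      by (rule Q_int[OF borel_measurable_indicator[OF NS] i])
    also have "\<dots> = 0" using nn_integral_indicator[OF NQ] N0 by simp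
    finally have "(\<lambda>p. (snd p, fst p i)) -` N \<inter> space JL \<in> null_sets Qn"
      using measurable_sets[OF mQ NS] unfolding space_Qn by (intro null_setsI)
    then have "(\<lambda>p. (snd p, fst p i)) -` N \<inter> space JL \<in> null_sets JL" using ac
      unfolding absolutely_continuous_def by blast
    then show "(\<integral>\<^sup>+ p. indicator N (snd p, fst p i) \<partial>JL) = 0"
      using ind_comp[OF mJ NS] null_setsD1 by metis
  qed
  finally show "N \<in> null_sets P" using NP by (intro null_setsI) simp_all
qed

lemma ennreal_split: "0 \<le> x \<Longrightarrow> ennreal (x * y) = ennreal x * ennreal y"
  by (rule ennreal_mult')

end

lemma kl_parts:
  assumes g: "g \<in> borel_measurable R" and M: "M = density R (\<lambda>x. ennreal (g x))" and nonneg: "\<And>x. 0 \<le> g x"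
  shows "(\<integral>\<^sup>+ x. ennreal (g x * ln (g x)) \<partial>R) = (\<integral>\<^sup>+ x. ennreal (ln (g x)) \<partial>M)"
    and "(\<integral>\<^sup>+ x. ennreal (-(g x * ln (g x))) \<partial>R) = (\<integral>\<^sup>+ x. ennreal (- ln (g x)) \<partial>M)"
proof -
  have e: "\<And>h. h \<in> borel_measurable R \<Longrightarrow> (\<integral>\<^sup>+ x. h x \<partial>M) = (\<integral>\<^sup>+ x. ennreal (g x) * h x \<partial>R)"
    unfolding M using g by (intro nn_integral_density) auto
  show "(\<integral>\<^sup>+ x. ennreal (g x * ln (g x)) \<partial>R) = (\<integral>\<^sup>+ x. ennreal (ln (g x)) \<partial>M)"
    using g by (subst e) (auto simp: ennreal_mult' nonneg intro!: nn_integral_cong)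
  show "(\<integral>\<^sup>+ x. ennreal (-(g x * ln (g x))) \<partial>R) = (\<integral>\<^sup>+ x. ennreal (- ln (g x)) \<partial>M)"
    using g by (subst e) (auto simp: ennreal_mult'[symmetric] nonneg intro!: nn_integral_cong)
qed

lemma neg_bound': "0 \<le> (x::real) \<Longrightarrow> - (x * ln x) \<le> 1"
proof (cases "x = 0")
  case False
  assume x: "0 \<le> x"
  then have xp: "0 < x" using False by simp
  have "ln (1/x) \<le> 1/x - 1" using xp by (intro ln_le_minus_one) simp
  then have "- ln x \<le> 1/x - 1" using xp by (simp add: ln_div)
  then have "x * (- ln x) \<le> x * (1/x - 1)" using xp by (intro mult_left_mono) auto
  then show ?thesis using xp by (simp add: algebra_simps)
qed simp

lemma kl_neg_bound:
  assumes R: "prob_space R" and g: "g \<in> borel_measurable R" and nonneg: "\<And>x. 0 \<le> g x"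
  shows "(\<integral>\<^sup>+ x. ennreal (-(g x * ln (g x))) \<partial>R) \<le> 1"
proof -
  have "(\<integral>\<^sup>+ x. ennreal (-(g x * ln (g x))) \<partial>R) \<le> (\<integral>\<^sup>+ x. 1 \<partial>R)"
    using neg_bound' nonneg by (intro nn_integral_mono) simp
  then show ?thesis using prob_space.emeasure_space_1[OF R] by simp
qed


context th7 begin

definition "FF p = enn2real (RN_deriv Qn JL p)"
definition "ff p = enn2real (RN_deriv Q P p)"

lemma FF_meas: "FF \<in> borel_measurable (MSS \<Otimes>\<^sub>M MW)"
  unfolding FF_def using borel_measurable_RN_deriv[of Qn JL]
  by (simp add: measurable_cong_sets[OF sets_Qn refl])

lemma ff_meas: "ff \<in> borel_measurable (MW \<Otimes>\<^sub>M MZ)"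
  unfolding ff_def using borel_measurable_RN_deriv[of Q P]
  by (simp add: measurable_cong_sets[OF sets_Q refl])

lemma FF_nonneg: "0 \<le> FF p" by (simp add: FF_def)
lemma ff_nonneg: "0 \<le> ff p" by (simp add: ff_def)

lemma MI_J: "mutual_inf MSS MW JL = KL_div JL Qn"
  unfolding mutual_inf_def distr_J_fst ..

lemma MI_P: "mutual_inf MW MZ P = KL_div P Q"
  unfolding mutual_inf_def distr_P_fst distr_P_snd ..

context assumes acJ: "absolutely_continuous Qn JL" begin

lemma J_dens: "JL = density Qn (\<lambda>p. ennreal (FF p))"
proof -
  interpret Qs: sigma_finite_measure Qn using prob_Qn by (simp add: prob_space_imp_sigma_finite)
  have sJ: "sigma_finite_measure JL" using prob_J by (simp add: prob_space_imp_sigma_finite)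
  have 1: "density Qn (RN_deriv Qn JL) = JL" by (rule Qs.density_RN_deriv[OF acJ sets_JQn])
  have "AE x in Qn. RN_deriv Qn JL x \<noteq> \<infinity>" by (rule Qs.RN_deriv_finite[OF sJ acJ sets_JQn])
  then have "density Qn (RN_deriv Qn JL) = density Qn (\<lambda>p. ennreal (FF p))"
    unfolding FF_def by (intro density_cong) (auto simp: less_top)
  with 1 show ?thesis by simp
qed

lemma P_ac': "absolutely_continuous Q P" by (rule P_ac[OF acJ])

lemma sets_PQ: "sets P = sets Q" using sets_P sets_Q by simp

lemma P_dens: "P = density Q (\<lambda>p. ennreal (ff p))"
proof -
  interpret Qs: sigma_finite_measure Q using prob_Q by (simp add: prob_space_imp_sigma_finite)
  have sP: "sigma_finite_measure P" using prob_P by (simp add: prob_space_imp_sigma_finite)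
  have 1: "density Q (RN_deriv Q P) = P" by (rule Qs.density_RN_deriv[OF P_ac' sets_PQ])
  have "AE x in Q. RN_deriv Q P x \<noteq> \<infinity>" by (rule Qs.RN_deriv_finite[OF sP P_ac' sets_PQ])
  then have "density Q (RN_deriv Q P) = density Q (\<lambda>p. ennreal (ff p))"
    unfolding ff_def by (intro density_cong) (auto simp: less_top)
  with 1 show ?thesis by simp
qed


lemma FF_measQ: "FF \<in> borel_measurable Qn"
  using FF_meas by (simp add: measurable_cong_sets[OF sets_Qn refl])
lemma ff_measQ: "ff \<in> borel_measurable Q"
  using ff_meas by (simp add: measurable_cong_sets[OF sets_Q refl])

lemma KL_J: "KL_div JL Qn = enn2ereal (\<integral>\<^sup>+ p. ennreal (ln (FF p)) \<partial>JL) - enn2ereal (\<integral>\<^sup>+ p. ennreal (- ln (FF p)) \<partial>JL)"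
proof -
  have "KL_div JL Qn = enn2ereal (\<integral>\<^sup>+ p. ennreal (FF p * ln (FF p)) \<partial>Qn) - enn2ereal (\<integral>\<^sup>+ p. ennreal (- (FF p * ln (FF p))) \<partial>Qn)"
    unfolding KL_div_def using sets_JQn acJ by (simp add: Let_def FF_def)
  then show ?thesis
    using kl_parts[OF FF_measQ J_dens FF_nonneg] by simp
qed

lemma BN_le: "(\<integral>\<^sup>+ p. ennreal (- ln (FF p)) \<partial>JL) \<le> 1"
  using kl_parts(2)[OF FF_measQ J_dens FF_nonneg] kl_neg_bound[OF prob_Qn FF_measQ FF_nonneg] by simp

lemma KL_P: "KL_div P Q = enn2ereal (\<integral>\<^sup>+ p. ennreal (ln (ff p)) \<partial>P) - enn2ereal (\<integral>\<^sup>+ p. ennreal (- ln (ff p)) \<partial>P)"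
proof -
  have "KL_div P Q = enn2ereal (\<integral>\<^sup>+ p. ennreal (ff p * ln (ff p)) \<partial>Q) - enn2ereal (\<integral>\<^sup>+ p. ennreal (- (ff p * ln (ff p))) \<partial>Q)"
    unfolding KL_div_def using sets_PQ P_ac' by (simp add: Let_def ff_def)
  then show ?thesis
    using kl_parts[OF ff_measQ P_dens ff_nonneg] by simp
qed

lemma AN_le: "(\<integral>\<^sup>+ p. ennreal (- ln (ff p)) \<partial>P) \<le> 1"
  using kl_parts(2)[OF ff_measQ P_dens ff_nonneg] kl_neg_bound[OF prob_Q ff_measQ ff_nonneg] by simp

end
end

context th7 begin
context assumes acJ: "absolutely_continuous Qn JL" begin

lemmas ff_measQ' = ff_measQ[OF acJ] and FF_measQ' = FF_measQ[OF acJ]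
  and J_dens' = J_dens[OF acJ] and P_dens' = P_dens[OF acJ]
  and KL_J' = KL_J[OF acJ] and KL_P' = KL_P[OF acJ] and BN_le' = BN_le[OF acJ] and AN_le' = AN_le[OF acJ]

abbreviation "cw w \<equiv> (\<integral>\<^sup>+ z. ennreal (ff (w, z)) \<partial>\<mu>')"

lemma ffQ_ennreal: "(\<lambda>p. ennreal (ff p)) \<in> borel_measurable Q"
  using ff_measQ' by simp

lemma cw_meas: "(\<lambda>w. cw w) \<in> borel_measurable \<nu>"
proof -
  interpret m': sigma_finite_measure \<mu>' using mu' by (simp add: prob_space_imp_sigma_finite)
  show ?thesis
    using m'.borel_measurable_nn_integral[of "\<lambda>w z. ennreal (ff (w, z))" \<nu>] ffQ_ennreal by simp
qed

lemma cw_one: "AE w in \<nu>. cw w = 1"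
proof -
  interpret m': sigma_finite_measure \<mu>' using mu' by (simp add: prob_space_imp_sigma_finite)
  interpret ns: sigma_finite_measure \<nu> using prob_nu by (simp add: prob_space_imp_sigma_finite)
  have "density \<nu> (\<lambda>w. cw w) = density \<nu> (\<lambda>_. 1)"
  proof (rule measure_eqI)
    show "sets (density \<nu> (\<lambda>w. cw w)) = sets (density \<nu> (\<lambda>_. 1))" by simp
    fix B assume "B \<in> sets (density \<nu> (\<lambda>w. cw w))"
    then have B: "B \<in> sets MW" by simp
    have fm: "(\<lambda>p. ennreal (ff p) * indicator B (fst p)) \<in> borel_measurable Q"
      using ffQ_ennreal B by (simp add: measurable_cong_sets[OF sets_Q refl])
    have "emeasure (density \<nu> (\<lambda>w. cw w)) B = (\<integral>\<^sup>+ w. cw w * indicator B w \<partial>\<nu>)"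
      using B cw_meas by (intro emeasure_density) auto
    also have "\<dots> = (\<integral>\<^sup>+ w. \<integral>\<^sup>+ z. ennreal (ff (w, z)) * indicator B w \<partial>\<mu>' \<partial>\<nu>)"
    proof (intro nn_integral_cong)
      fix w assume "w \<in> space \<nu>"
      then have "(\<lambda>z. ennreal (ff (w, z))) \<in> borel_measurable \<mu>'"
        using measurable_Pair2[OF ffQ_ennreal] by simp
      then show "cw w * indicator B w = (\<integral>\<^sup>+ z. ennreal (ff (w, z)) * indicator B w \<partial>\<mu>')"
        by (simp add: nn_integral_multc)
    qed
    also have "\<dots> = (\<integral>\<^sup>+ p. ennreal (ff p) * indicator B (fst p) \<partial>Q)"
      using m'.nn_integral_fst[OF fm] by simp
    also have "\<dots> = (\<integral>\<^sup>+ p. indicator B (fst p) \<partial>P)"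
    proof -
      have "(\<integral>\<^sup>+ p. indicator B (fst p) \<partial>P) = (\<integral>\<^sup>+ p. indicator B (fst p) \<partial>density Q (\<lambda>p. ennreal (ff p)))"
        using P_dens[OF acJ] by (rule arg_cong)
      also have "\<dots> = (\<integral>\<^sup>+ p. ennreal (ff p) * indicator B (fst p) \<partial>Q)"
        using ffQ_ennreal B by (intro nn_integral_density) (auto simp: measurable_cong_sets[OF sets_Q refl])
      finally show ?thesis by simp
    qed
    also have "\<dots> = emeasure (distr P MW fst) B"
      using B by (intro emeasure_distr_nn[symmetric]) (simp_all add: measurable_cong_sets[OF sets_P refl])
    also have "\<dots> = emeasure (density \<nu> (\<lambda>_. 1)) B"
      unfolding distr_P_fst density_1 ..
    finally show "emeasure (density \<nu> (\<lambda>w. cw w)) B = emeasure (density \<nu> (\<lambda>_. 1)) B" .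
  qed
  then show ?thesis
    using ns.density_unique[OF cw_meas, of "\<lambda>_. 1"] by simp
qed


abbreviation "HH p \<equiv> \<Prod>i<n. ff (snd p, fst p i)"

lemma fi_measJ: "i < n \<Longrightarrow> (\<lambda>p. ff (snd p, fst p i)) \<in> borel_measurable JL"
  using comp_meas[OF _ ff_meas] by blast

lemma fi_measQn: "i < n \<Longrightarrow> (\<lambda>p. ff (snd p, fst p i)) \<in> borel_measurable Qn"
  using fi_measJ measurable_cong_sets[OF sets_JQn refl] by blast

lemma ptw_le: "0 \<le> (F::real) \<Longrightarrow> 0 \<le> H \<Longrightarrow> ennreal F * ennreal (H / F) \<le> ennreal H"
  by (cases "F = 0") (auto simp: ennreal_mult'[symmetric])

lemma H_bound: "(\<integral>\<^sup>+ p. ennreal (FF p) * ennreal (HH p / FF p) \<partial>Qn) \<le> 1"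
proof -
  interpret PS: pair_sigma_finite \<mu>n \<nu>
    using prob_mun prob_nu by (intro pair_sigma_finite.intro) (auto simp: prob_space_imp_sigma_finite)
  interpret PP: product_sigma_finite "\<lambda>_. \<mu>'"
    by (rule product_sigma_finite.intro) (rule prob_space_imp_sigma_finite[OF mu'(1)])
  have pm: "(\<lambda>p. \<Prod>i<n. ennreal (ff (snd p, fst p i))) \<in> borel_measurable Qn"
    using fi_measQn by (intro borel_measurable_prod_ennreal) auto
  have "(\<integral>\<^sup>+ p. ennreal (FF p) * ennreal (HH p / FF p) \<partial>Qn) \<le> (\<integral>\<^sup>+ p. (\<Prod>i<n. ennreal (ff (snd p, fst p i))) \<partial>Qn)"
  proof (intro nn_integral_mono)
    fix p
    have "ennreal (FF p) * ennreal (HH p / FF p) \<le> ennreal (HH p)"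
      by (intro ptw_le FF_nonneg prod_nonneg) (simp add: ff_nonneg)
    also have "\<dots> = (\<Prod>i<n. ennreal (ff (snd p, fst p i)))"
      by (simp add: prod_ennreal ff_nonneg)
    finally show "ennreal (FF p) * ennreal (HH p / FF p) \<le> (\<Prod>i<n. ennreal (ff (snd p, fst p i)))" .
  qed
  also have "\<dots> = (\<integral>\<^sup>+ w. \<integral>\<^sup>+ s. (\<Prod>i<n. ennreal (ff (w, s i))) \<partial>\<mu>n \<partial>\<nu>)"
    using PS.nn_integral_snd[OF pm] by simp
  also have "\<dots> = (\<integral>\<^sup>+ w. (\<Prod>i<n. cw w) \<partial>\<nu>)"
  proof (intro nn_integral_cong)
    fix w assume "w \<in> space \<nu>"
    then have "(\<lambda>z. ennreal (ff (w, z))) \<in> borel_measurable \<mu>'"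
      using measurable_Pair2[OF ffQ_ennreal] by simp
    then show "(\<integral>\<^sup>+ s. (\<Prod>i<n. ennreal (ff (w, s i))) \<partial>\<mu>n) = (\<Prod>i<n. cw w)"
      using PP.product_nn_integral_prod[of "{..<n}" "\<lambda>i z. ennreal (ff (w, z))"] by simp
  qed
  also have "\<dots> = (\<integral>\<^sup>+ w. 1 \<partial>\<nu>)"
    by (intro nn_integral_cong_AE) (use cw_one in auto)
  also have "\<dots> = 1" using prob_space.emeasure_space_1[OF prob_nu] by simp
  finally show ?thesis .
qed


lemma AE_F: "AE p in JL. 0 < FF p"
proof -
  have "AE p in density Qn (\<lambda>p. ennreal (FF p)). 0 < FF p"
    using AE_density[of "\<lambda>p. ennreal (FF p)" Qn "\<lambda>p. 0 < FF p"] FF_measQ' by simp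
  then show ?thesis unfolding J_dens'[symmetric] .
qed

lemma AE_f: "AE p in P. 0 < ff p"
proof -
  have "AE p in density Q (\<lambda>p. ennreal (ff p)). 0 < ff p"
    using AE_density[of "\<lambda>p. ennreal (ff p)" Q "\<lambda>p. 0 < ff p"] ff_measQ' by simp
  then show ?thesis unfolding P_dens'[symmetric] .
qed

lemma c_ne0: "c \<noteq> 0" using n by (simp add: c_def)

lemma AE_fi: assumes i: "i < n" shows "AE p in JL. 0 < ff (snd p, fst p i)"
proof -
  define N where "N = {x \<in> space (MW \<Otimes>\<^sub>M MZ). \<not> 0 < ff x}"
  have NS: "N \<in> sets (MW \<Otimes>\<^sub>M MZ)" unfolding N_def using ff_meas by measurable
  have "emeasure P N = 0"
    using AE_f AE_iff_measurable[of N P "\<lambda>p. 0 < ff p"] NS unfolding N_def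
    by (simp add: sets_P space_P)
  moreover have "emeasure P N = c * (\<Sum>i<n. \<integral>\<^sup>+ p. indicator N (snd p, fst p i) \<partial>JL)"
  proof -
    have "emeasure P N = (\<integral>\<^sup>+ x. indicator N x \<partial>P)" using NS sets_P by (simp del: nn_integral_indicator add: nn_integral_indicator)
    also have "\<dots> = c * (\<Sum>i<n. \<integral>\<^sup>+ p. indicator N (snd p, fst p i) \<partial>JL)"
      by (rule P_int) (rule borel_measurable_indicator[OF NS])
    finally show ?thesis .
  qed
  ultimately have "(\<Sum>i<n. \<integral>\<^sup>+ p. indicator N (snd p, fst p i) \<partial>JL) = 0"
    using c_ne0 by simp
  then have "(\<integral>\<^sup>+ p. indicator N (snd p, fst p i) \<partial>JL) = 0" using i by simp
  then have E: "emeasure JL ((\<lambda>p. (snd p, fst p i)) -` N \<inter> space JL) = 0"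
    using ind_comp[OF pm_meas[OF i] NS] by simp
  have S: "(\<lambda>p. (snd p, fst p i)) -` N \<inter> space JL \<in> sets JL"
    using measurable_sets[OF pm_meas[OF i] NS] .
  have eq: "{p \<in> space JL. \<not> 0 < ff (snd p, fst p i)} = (\<lambda>p. (snd p, fst p i)) -` N \<inter> space JL"
    using measurable_space[OF pm_meas[OF i]] unfolding N_def by auto
  show ?thesis using AE_iff_measurable[OF S eq] E by simp
qed

end
end

lemma ptw_key:
  fixes F :: real and f :: "nat \<Rightarrow> real"
  assumes F: "0 < F" and f: "\<And>i. i < n \<Longrightarrow> 0 < f i"
  shows "(\<Sum>i<n. ennreal (ln (f i))) + ennreal (- ln F) + 1
       \<le> ennreal (ln F) + (\<Sum>i<n. ennreal (- ln (f i))) + ennreal ((\<Prod>i<n. f i) / F)"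
proof -
  define H where "H = (\<Prod>i<n. f i)"
  have Hp: "0 < H" unfolding H_def using f by (intro prod_pos) auto
  have lnH: "ln H = (\<Sum>i<n. ln (f i))" unfolding H_def using f by (intro ln_prod) (auto simp: less_imp_neq[symmetric])
  have "ln (H / F) \<le> H / F - 1" using Hp F by (intro ln_le_minus_one) simp
  then have key: "(\<Sum>i<n. ln (f i)) - ln F \<le> H / F - 1" using Hp F lnH by (simp add: ln_div)
  have sp: "(\<Sum>i<n. ln (f i)) = (\<Sum>i<n. max (ln (f i)) 0) - (\<Sum>i<n. max (- ln (f i)) 0)"
    by (simp add: sum_subtractf[symmetric]) (intro sum.cong refl, linarith)
  have real_ineq: "(\<Sum>i<n. max (ln (f i)) 0) + max (- ln F) 0 + 1 \<le> max (ln F) 0 + (\<Sum>i<n. max (- ln (f i)) 0) + H / F"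
    using key sp by linarith
  have e1: "\<And>x. ennreal x = ennreal (max x 0)" by (metis ennreal_max_0 max.commute)
  have s1: "(\<Sum>i<n. ennreal (ln (f i))) = ennreal (\<Sum>i<n. max (ln (f i)) 0)"
  proof -
    have "(\<Sum>i<n. ennreal (ln (f i))) = (\<Sum>i<n. ennreal (max (ln (f i)) 0))"
      by (intro sum.cong refl) (rule e1)
    also have "\<dots> = ennreal (\<Sum>i<n. max (ln (f i)) 0)" by (rule sum_ennreal) simp
    finally show ?thesis .
  qed
  have s2: "(\<Sum>i<n. ennreal (- ln (f i))) = ennreal (\<Sum>i<n. max (- ln (f i)) 0)"
  proof -
    have "(\<Sum>i<n. ennreal (- ln (f i))) = (\<Sum>i<n. ennreal (max (- ln (f i)) 0))"
      by (intro sum.cong refl) (rule e1)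
    also have "\<dots> = ennreal (\<Sum>i<n. max (- ln (f i)) 0)" by (rule sum_ennreal) simp
    finally show ?thesis .
  qed
  have nn1: "0 \<le> (\<Sum>i<n. max (ln (f i)) 0)" "0 \<le> (\<Sum>i<n. max (- ln (f i)) 0)"
    by (auto intro: sum_nonneg)
  have "(\<Sum>i<n. ennreal (ln (f i))) + ennreal (- ln F) + 1
      = ennreal ((\<Sum>i<n. max (ln (f i)) 0) + max (- ln F) 0 + 1)"
    unfolding s1 e1[of "- ln F"] using nn1 by (simp add: ennreal_plus)
  also have "\<dots> \<le> ennreal (max (ln F) 0 + (\<Sum>i<n. max (- ln (f i)) 0) + H / F)"
    using real_ineq by (rule ennreal_leI)
  also have "\<dots> = ennreal (ln F) + (\<Sum>i<n. ennreal (- ln (f i))) + ennreal (H / F)"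
    unfolding s2 e1[of "ln F"] using nn1 Hp F by (simp add: ennreal_plus)
  finally show ?thesis unfolding H_def .
qed


context th7 begin
context assumes acJ: "absolutely_continuous Qn JL" begin

lemmas ff_measQ'' = ff_measQ[OF acJ] and FF_measQ'' = FF_measQ[OF acJ]
  and J_dens'' = J_dens[OF acJ] and P_dens'' = P_dens[OF acJ]
  and AE_F' = AE_F[OF acJ] and AE_fi' = AE_fi[OF acJ] and H_bound' = H_bound[OF acJ]

lemma FF_measJ: "FF \<in> borel_measurable JL"
  using FF_meas measurable_cong_sets[OF sets_J refl] by blast

lemma core:
  "(\<Sum>i<n. \<integral>\<^sup>+ p. ennreal (ln (ff (snd p, fst p i))) \<partial>JL) + (\<integral>\<^sup>+ p. ennreal (- ln (FF p)) \<partial>JL)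
   \<le> (\<integral>\<^sup>+ p. ennreal (ln (FF p)) \<partial>JL) + (\<Sum>i<n. \<integral>\<^sup>+ p. ennreal (- ln (ff (snd p, fst p i))) \<partial>JL)"
proof -
  have m1: "\<And>i. i < n \<Longrightarrow> (\<lambda>p. ennreal (ln (ff (snd p, fst p i)))) \<in> borel_measurable JL"
    by (rule measurable_compose[OF fi_measJ[OF acJ]]) auto
  have m2: "\<And>i. i < n \<Longrightarrow> (\<lambda>p. ennreal (- ln (ff (snd p, fst p i)))) \<in> borel_measurable JL"
    by (rule measurable_compose[OF fi_measJ[OF acJ]]) auto
  have m3: "(\<lambda>p. ennreal (ln (FF p))) \<in> borel_measurable JL"
    by (rule measurable_compose[OF FF_measJ]) auto
  have m4: "(\<lambda>p. ennreal (- ln (FF p))) \<in> borel_measurable JL"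
    by (rule measurable_compose[OF FF_measJ]) auto
  have mH: "(\<lambda>p. HH p) \<in> borel_measurable JL"
    using fi_measJ[OF acJ] by (intro borel_measurable_prod) auto
  have m5: "(\<lambda>p. ennreal (HH p / FF p)) \<in> borel_measurable JL"
  proof -
    have "(\<lambda>p. HH p / FF p) \<in> borel_measurable JL" using mH FF_measJ by (rule borel_measurable_divide)
    then show ?thesis by (rule measurable_compose) auto
  qed
  have m5Q: "(\<lambda>p. ennreal (HH p / FF p)) \<in> borel_measurable Qn"
    using m5 measurable_cong_sets[OF sets_JQn refl] by blast
  have int5: "(\<integral>\<^sup>+ p. ennreal (HH p / FF p) \<partial>JL) \<le> 1"
  proof -
    have "(\<integral>\<^sup>+ p. ennreal (HH p / FF p) \<partial>JL) = (\<integral>\<^sup>+ p. ennreal (HH p / FF p) \<partial>density Qn (\<lambda>p. ennreal (FF p)))"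
      using J_dens'' by (rule arg_cong)
    also have "\<dots> = (\<integral>\<^sup>+ p. ennreal (FF p) * ennreal (HH p / FF p) \<partial>Qn)"
      using FF_measQ'' m5Q by (intro nn_integral_density) auto
    finally show ?thesis using H_bound' by simp
  qed
  have sum1: "(\<integral>\<^sup>+ p. (\<Sum>i<n. ennreal (ln (ff (snd p, fst p i)))) \<partial>JL) = (\<Sum>i<n. \<integral>\<^sup>+ p. ennreal (ln (ff (snd p, fst p i))) \<partial>JL)"
    by (rule nn_integral_sum) (use m1 in auto)
  have sum2: "(\<integral>\<^sup>+ p. (\<Sum>i<n. ennreal (- ln (ff (snd p, fst p i)))) \<partial>JL) = (\<Sum>i<n. \<integral>\<^sup>+ p. ennreal (- ln (ff (snd p, fst p i))) \<partial>JL)"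
    by (rule nn_integral_sum) (use m2 in auto)
  have AEall: "AE p in JL. 0 < FF p \<and> (\<forall>i\<in>{..<n}. 0 < ff (snd p, fst p i))"
  proof -
    have "AE p in JL. \<forall>i\<in>{..<n}. 0 < ff (snd p, fst p i)"
      using AE_fi' by (subst AE_finite_all) auto
    with AE_F' show ?thesis by (simp add: AE_conj_iff)
  qed
  have "(\<Sum>i<n. \<integral>\<^sup>+ p. ennreal (ln (ff (snd p, fst p i))) \<partial>JL) + (\<integral>\<^sup>+ p. ennreal (- ln (FF p)) \<partial>JL) + 1
     = (\<integral>\<^sup>+ p. (\<Sum>i<n. ennreal (ln (ff (snd p, fst p i)))) + ennreal (- ln (FF p)) + 1 \<partial>JL)"
    using m1 m4 prob_space.emeasure_space_1[OF prob_J]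
    by (simp add: nn_integral_add sum1[symmetric])
  also have "\<dots> \<le> (\<integral>\<^sup>+ p. ennreal (ln (FF p)) + (\<Sum>i<n. ennreal (- ln (ff (snd p, fst p i)))) + ennreal (HH p / FF p) \<partial>JL)"
  proof (rule nn_integral_mono_AE)
    show "AE p in JL. (\<Sum>i<n. ennreal (ln (ff (snd p, fst p i)))) + ennreal (- ln (FF p)) + 1
       \<le> ennreal (ln (FF p)) + (\<Sum>i<n. ennreal (- ln (ff (snd p, fst p i)))) + ennreal (HH p / FF p)"
      using AEall
    proof eventually_elim
      case (elim p)
      then show ?case by (intro ptw_key) auto
    qed
  qed
  also have "\<dots> = (\<integral>\<^sup>+ p. ennreal (ln (FF p)) \<partial>JL) + (\<Sum>i<n. \<integral>\<^sup>+ p. ennreal (- ln (ff (snd p, fst p i))) \<partial>JL) + (\<integral>\<^sup>+ p. ennreal (HH p / FF p) \<partial>JL)"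
    using m2 m3 m5 by (simp add: nn_integral_add sum2[symmetric])
  also have "\<dots> \<le> (\<integral>\<^sup>+ p. ennreal (ln (FF p)) \<partial>JL) + (\<Sum>i<n. \<integral>\<^sup>+ p. ennreal (- ln (ff (snd p, fst p i))) \<partial>JL) + 1"
    using int5 by (intro add_left_mono)
  finally show ?thesis
    by (simp only: add.commute[of _ 1] ennreal_add_left_cancel_le) simp
qed

end
end

context th7 begin

lemma MI_ineq: "mutual_inf MW MZ P \<le> mutual_inf MSS MW JL / ereal (real n)"
proof (cases "absolutely_continuous Qn JL")
  case False
  then have "mutual_inf MSS MW JL = \<infinity>" unfolding MI_J KL_div_def by simp
  then show ?thesis using n by simp
next
  case True
  note acJ = True
  define SAP where "SAP = (\<Sum>i<n. \<integral>\<^sup>+ p. ennreal (ln (ff (snd p, fst p i))) \<partial>JL)"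
  define SAN where "SAN = (\<Sum>i<n. \<integral>\<^sup>+ p. ennreal (- ln (ff (snd p, fst p i))) \<partial>JL)"
  define BP where "BP = (\<integral>\<^sup>+ p. ennreal (ln (FF p)) \<partial>JL)"
  define BN where "BN = (\<integral>\<^sup>+ p. ennreal (- ln (FF p)) \<partial>JL)"
  have core': "SAP + BN \<le> BP + SAN" unfolding SAP_def SAN_def BP_def BN_def by (rule core[OF acJ])
  have BN1: "BN \<le> 1" unfolding BN_def by (rule BN_le[OF acJ])
  have lm1: "(\<lambda>x. ennreal (ln (ff x))) \<in> borel_measurable (MW \<Otimes>\<^sub>M MZ)"
    by (rule measurable_compose[OF ff_meas]) auto
  have lm2: "(\<lambda>x. ennreal (- ln (ff x))) \<in> borel_measurable (MW \<Otimes>\<^sub>M MZ)"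
    by (rule measurable_compose[OF ff_meas]) auto
  have AP: "(\<integral>\<^sup>+ p. ennreal (ln (ff p)) \<partial>P) = c * SAP"
    unfolding SAP_def using P_int[OF lm1] by simp
  have AN: "(\<integral>\<^sup>+ p. ennreal (- ln (ff p)) \<partial>P) = c * SAN"
    unfolding SAN_def using P_int[OF lm2] by simp
  have AN1: "c * SAN \<le> 1" using AN_le[OF acJ] AN by simp
  have KLP: "mutual_inf MW MZ P = enn2ereal (c * SAP) - enn2ereal (c * SAN)"
    using KL_P[OF acJ] AP AN MI_P by simp
  have KLJ: "mutual_inf MSS MW JL = enn2ereal BP - enn2ereal BN"
    using KL_J[OF acJ] MI_J unfolding BP_def BN_def by simp
  have BNf: "BN < \<infinity>" using BN1 by (simp add: le_less_trans)
  show ?thesis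
  proof (cases "BP = \<infinity>")
    case True
    have "mutual_inf MSS MW JL = \<infinity>" unfolding KLJ using True BNf
      by (cases BN) (auto simp: less_top)
    then show ?thesis using n by simp
  next
    case False
    then have BPf: "BP < \<infinity>" by (simp add: less_top)
    have "of_nat n * (c * SAN) = (c * of_nat n) * SAN" by (simp only: ac_simps)
    then have "SAN = of_nat n * (c * SAN)" using c_n by simp
    also have "\<dots> \<le> of_nat n * 1" using AN1 by (intro mult_left_mono) auto
    finally have SANf: "SAN < \<infinity>" using le_less_trans[OF _ of_nat_less_top] by simp
    have "SAP \<le> SAP + BN" by simp
    then have "SAP \<le> BP + SAN" using core' by (rule order_trans)
    moreover have "BP + SAN < \<infinity>" using BPf SANf by simp
    ultimately have SAPf: "SAP < \<infinity>" by (rule le_less_trans)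
    obtain x1 where x1: "SAP = ennreal x1" "0 \<le> x1" using SAPf by (cases SAP) auto
    obtain x2 where x2: "SAN = ennreal x2" "0 \<le> x2" using SANf by (cases SAN) auto
    obtain y1 where y1: "BP = ennreal y1" "0 \<le> y1" using BPf by (cases BP) auto
    obtain y2 where y2: "BN = ennreal y2" "0 \<le> y2" using BNf by (cases BN) auto
    have ri: "x1 + y2 \<le> y1 + x2"
      using core' x1 x2 y1 y2 by (simp add: ennreal_plus[symmetric] del: ennreal_plus)
    have np: "0 < real n" using n by simp
    have c1: "c * ennreal x1 = ennreal (x1 / real n)" and c2: "c * ennreal x2 = ennreal (x2 / real n)"
      by (simp_all add: c_def ennreal_mult''[symmetric] x1 x2 del: ennreal_mult'')
    have "mutual_inf MW MZ P = ereal (x1 / real n - x2 / real n)"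
      unfolding KLP x1 x2 c1 c2 using x1 x2 by simp
    also have "\<dots> \<le> ereal ((y1 - y2) / real n)"
      using ri np by (simp add: diff_divide_distrib[symmetric] divide_right_mono)
    also have "\<dots> = mutual_inf MSS MW JL / ereal (real n)"
      unfolding KLJ y1 y2 using y1 y2 n by simp
    finally show ?thesis .
  qed
qed

lemma main:
  assumes marginal: "\<nu> \<in> \<M>"
  shows "gen MZ MW n loss \<mu> \<mu>' A \<ge> D4 MW MZ loss \<mu> \<mu>' (mutual_inf MSS MW JL / ereal (real n)) \<M>"
  unfolding D4_def
proof (rule INF_lower2[OF marginal], rule INF_lower2)
  show "P \<in> {P \<in> couplings MW MZ \<nu> \<mu>'. mutual_inf MW MZ P \<le> mutual_inf MSS MW JL / ereal (real n)}"
    using P_coupling MI_ineq by simp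
  show "enn2ereal (\<integral>\<^sup>+ p. pop_risk \<mu> loss (fst p) \<partial>P) - enn2ereal (\<integral>\<^sup>+ p. ennreal (loss (fst p) (snd p)) \<partial>P)
      \<le> gen MZ MW n loss \<mu> \<mu>' A"
    using value_P by simp
qed

end

theorem theorem7:
  fixes MZ :: "'z measure" and MW :: "'w measure"
    and loss :: "'w \<Rightarrow> 'z \<Rightarrow> real"
    and \<mu> \<mu>' :: "'z measure" and n :: nat
    and A :: "(nat \<Rightarrow> 'z) \<Rightarrow> 'w measure"
    and \<M> :: "'w measure set"
  assumes loss_meas: "(\<lambda>(w, z). loss w z) \<in> borel_measurable (MW \<Otimes>\<^sub>M MZ)"
    and loss_nonneg: "\<And>w z. 0 \<le> loss w z"
    and mu: "prob_space \<mu>" "sets \<mu> = sets MZ"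
    and mu': "prob_space \<mu>'" "sets \<mu>' = sets MZ"
    and n: "0 < n"
    and kernel: "A \<in> PiM {..<n} (\<lambda>_. MZ) \<rightarrow>\<^sub>M prob_algebra MW"
    and family: "\<And>\<nu>. \<nu> \<in> \<M> \<Longrightarrow> prob_space \<nu> \<and> sets \<nu> = sets MW"
    and marginal: "distr (joint_law MZ MW n \<mu>' A) MW snd \<in> \<M>"
    and finite_pop: "(\<integral>\<^sup>+ p. pop_risk \<mu> loss (snd p) \<partial>joint_law MZ MW n \<mu>' A) < \<infinity>"
    and finite_emp: "(\<integral>\<^sup>+ p. ennreal (emp_risk n loss (fst p) (snd p)) \<partial>joint_law MZ MW n \<mu>' A) < \<infinity>"
  shows "gen MZ MW n loss \<mu> \<mu>' A
           \<ge> D4 MW MZ loss \<mu> \<mu>' (mutual_inf (PiM {..<n} (\<lambda>_. MZ)) MW (joint_law MZ MW n \<mu>' A) / ereal (real n)) \<M>"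
proof -
  interpret th7 MZ MW loss \<mu> \<mu>' n A
    by (rule th7.intro) (fact loss_meas loss_nonneg mu mu' n kernel)+
  show ?thesis by (rule main[OF marginal])
qed

end
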